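(* Let $H$ be a graph and $Y$ a minimal blocking set of $H$. Let $H'$ be obtained from $H$ by adding a new vertex $v$ adjacent exactly to the vertices of $Y$. Then $\mathrm{OPT}(H')=\mathrm{OPT}(H)+1$ and $Y\cup\{v\}$ is a minimal blocking set of $H'$.
   Context: $\mathrm{OPT}(G)$ is the minimum vertex cover size. $Y\subseteq V(G)$ is a blocking set of $G$ if no vertex cover of $G$ of size $\mathrm{OPT}(G)$ contains $Y$; minimal if no proper subset is a blocking set. *)

theory Defs
  imports Main
begin

definition graph :: "'a set \<Rightarrow> 'a set set \<Rightarrow> bool" where
  "graph V E \<longleftrightarrow> finite V \<and> (\<forall>e\<in>E. e \<subseteq> V \<and> card e = 2)"

definition vertex_cover :: "'a set \<Rightarrow> 'a set set \<Rightarrow> 'a set \<Rightarrow> bool" where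
  "vertex_cover V E C \<longleftrightarrow> C \<subseteq> V \<and> (\<forall>e\<in>E. e \<inter> C \<noteq> {})"

definition OPT :: "'a set \<Rightarrow> 'a set set \<Rightarrow> nat" where
  "OPT V E = (LEAST k. \<exists>C. vertex_cover V E C \<and> card C = k)"

definition blocking_set :: "'a set \<Rightarrow> 'a set set \<Rightarrow> 'a set \<Rightarrow> bool" where
  "blocking_set V E Y \<longleftrightarrow> Y \<subseteq> V \<and>
     \<not> (\<exists>C. vertex_cover V E C \<and> card C = OPT V E \<and> Y \<subseteq> C)"

definition minimal_blocking_set :: "'a set \<Rightarrow> 'a set set \<Rightarrow> 'a set \<Rightarrow> bool" where
  "minimal_blocking_set V E Y \<longleftrightarrow> blocking_set V E Y \<and>
     (\<forall>Z. Z \<subset> Y \<longrightarrow> \<not> blocking_set V E Z)"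

end

theory Submission
  imports Defs
begin

lemma opt_ex:
  assumes "vertex_cover V E C"
  shows "\<exists>C. vertex_cover V E C \<and> card C = OPT V E"
proof -
  have "\<exists>k. \<exists>C. vertex_cover V E C \<and> card C = k" using assms by blast
  from LeastI_ex[OF this] show ?thesis unfolding OPT_def by blast
qed

lemma opt_le:
  assumes "vertex_cover V E C"
  shows "OPT V E \<le> card C"
  unfolding OPT_def using assms by (blast intro: Least_le)

theorem mainTheorem14:
  fixes V :: "'a set" and E :: "'a set set" and Y :: "'a set" and v :: 'a
  assumes "graph V E"
    and "minimal_blocking_set V E Y"
    and "v \<notin> V"
  shows "OPT (insert v V) (E \<union> {{v, y} | y. y \<in> Y}) = OPT V E + 1
       \<and> minimal_blocking_set (insert v V) (E \<union> {{v, y} | y. y \<in> Y}) (insert v Y)"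
proof -
  define E' where "E' = E \<union> {{v, y} | y. y \<in> Y}"
  define V' where "V' = insert v V"
  define k where "k = OPT V E"
  have finV: "finite V" and EV: "\<And>e. e \<in> E \<Longrightarrow> e \<subseteq> V" using assms(1) unfolding graph_def by auto
  have bl: "blocking_set V E Y" and mn: "\<And>Z. Z \<subset> Y \<Longrightarrow> \<not> blocking_set V E Z"
    using assms(2) unfolding minimal_blocking_set_def by auto
  have YV: "Y \<subseteq> V" and nob: "\<And>C. vertex_cover V E C \<Longrightarrow> card C = k \<Longrightarrow> \<not> Y \<subseteq> C"
    using bl unfolding blocking_set_def k_def by auto
  have cV: "vertex_cover V E V" unfolding vertex_cover_def
  proof (intro conjI ballI)
    fix e assume e: "e \<in> E"
    then have "e \<subseteq> V" "card e = 2" using assms(1) unfolding graph_def by auto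
    then show "e \<inter> V \<noteq> {}" by (metis Int_absorb2 card.empty zero_neq_numeral)
  qed simp
  obtain C0 where C0: "vertex_cover V E C0" "card C0 = k" using opt_ex[OF cV] k_def by auto
  have Yne: "Y \<noteq> {}" using nob[OF C0] by auto
  have lowk: "\<And>C. vertex_cover V E C \<Longrightarrow> k \<le> card C" using opt_le k_def by auto
  have restr: "vertex_cover V E (C' - {v})" if "vertex_cover V' E' C'" for C'
    using that EV assms(3) unfolding vertex_cover_def V'_def E'_def by blast
  have ext: "vertex_cover V' E' C'" if "vertex_cover V E C" "C' = insert v C \<or> (C' = C \<union> Y)" for C C'
    using that YV unfolding vertex_cover_def V'_def E'_def by blast
  have finC: "finite C" if "vertex_cover V' E' C" for C
    using that finV unfolding vertex_cover_def V'_def using finite_subset by blast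
  have lower: "k + 1 \<le> card C'" if cv: "vertex_cover V' E' C'" for C'
  proof (cases "v \<in> C'")
    case True
    then have "card C' = card (C' - {v}) + 1" using finC[OF cv]
    proof -
      have "card (C' - {v}) = card C' - 1" using True by (simp add: card_Diff_singleton)
      moreover have "card C' > 0" using True finC[OF cv] card_gt_0_iff by blast
      ultimately show ?thesis by linarith
    qed
    then show ?thesis using lowk[OF restr[OF cv]] by simp
  next
    case False
    have "Y \<subseteq> C'"
    proof
      fix y assume "y \<in> Y"
      then have "{v,y} \<in> E'" unfolding E'_def by blast
      then have "{v,y} \<inter> C' \<noteq> {}" using cv unfolding vertex_cover_def by blast
      then show "y \<in> C'" using False by auto
    qed
    moreover have "C' - {v} = C'" using False by auto
    ultimately have "k \<le> card C'" "card C' \<noteq> k" using lowk[OF restr[OF cv]] nob[OF restr[OF cv]]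
      by auto
    then show ?thesis by simp
  qed
  have cv0: "vertex_cover V' E' (insert v C0)" using ext[OF C0(1)] by blast
  have cardv0: "card (insert v C0) = k + 1"
  proof -
    have "finite C0" "v \<notin> C0" using C0 assms(3) finV finite_subset unfolding vertex_cover_def by auto
    then show ?thesis using C0(2) by simp
  qed
  have opt': "OPT V' E' = k + 1"
  proof -
    obtain C where "vertex_cover V' E' C" "card C = OPT V' E'" using opt_ex[OF cv0] by auto
    then have "k + 1 \<le> OPT V' E'" using lower by metis
    then show ?thesis using opt_le[OF cv0] cardv0 by simp
  qed
  have blk: "blocking_set V' E' (insert v Y)"
    unfolding blocking_set_def
  proof (intro conjI notI)
    show "insert v Y \<subseteq> V'" using YV V'_def by auto
  next
    assume "\<exists>C. vertex_cover V' E' C \<and> card C = OPT V' E' \<and> insert v Y \<subseteq> C"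
    then obtain C where C: "vertex_cover V' E' C" "card C = k + 1" "insert v Y \<subseteq> C" using opt' by auto
    have "card (C - {v}) = k" using C finC[OF C(1)] by auto
    moreover have "Y \<subseteq> C - {v}" using C(3) assms(3) YV by auto
    ultimately show False using nob[OF restr[OF C(1)]] by blast
  qed
  have nonbl: "\<not> blocking_set V' E' Z" if "Z \<subset> insert v Y" for Z
  proof -
    have "\<exists>C. vertex_cover V' E' C \<and> card C = k + 1 \<and> Z \<subseteq> C"
    proof (cases "v \<in> Z")
      case True
      have sub: "Z - {v} \<subset> Y" using that True by auto
      have "\<not> blocking_set V E (Z - {v})" using mn[OF sub] .
      then obtain C where C: "vertex_cover V E C" "card C = k" "Z - {v} \<subseteq> C"
        using sub YV unfolding blocking_set_def k_def by auto
      have "card (insert v C) = k + 1"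
      proof -
        have "finite C" "v \<notin> C" using C assms(3) finV finite_subset unfolding vertex_cover_def by auto
        then show ?thesis using C(2) by simp
      qed
      then show ?thesis using ext[OF C(1)] C(3) by blast
    next
      case False
      then have ZY: "Z \<subseteq> Y" using that by auto
      obtain y where y: "y \<in> Y" using Yne by auto
      have sub: "Y - {y} \<subset> Y" using y by auto
      have "\<not> blocking_set V E (Y - {y})" using mn[OF sub] .
      then obtain C where C: "vertex_cover V E C" "card C = k" "Y - {y} \<subseteq> C"
        using sub YV unfolding blocking_set_def k_def by auto
      have yC: "y \<notin> C" using nob[OF C(1,2)] C(3) by auto
      have eq: "C \<union> Y = insert y C" using C(3) y by auto
      have finCC: "finite C" using C(1) finV unfolding vertex_cover_def using finite_subset by auto
      have "card (C \<union> Y) = k + 1" using eq yC finCC C(2) by simp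
      then show ?thesis using ext[OF C(1)] ZY by blast
    qed
    then show ?thesis unfolding blocking_set_def using opt' by auto
  qed
  show ?thesis using opt' blk nonbl unfolding minimal_blocking_set_def E'_def V'_def k_def by auto
qed

end
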